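(* Consider $\dot x=f(x,u)$, $x\in\mathbb{R}^n$, $u\in\mathbb{R}^p$, with $f$ continuously differentiable and solutions defined for all $t\ge0$. Let $K\subseteq\mathbb{R}^n$ be a proper polyhedral cone with representation $(H,V)$, $\mathbf{e}\in\mathrm{int}(K)$, $c\in\mathbb{R}$, and $\|\cdot\|_{\mathcal U}$ a norm on $\mathbb{R}^p$. Assume the system is $K$-monotone and $D_xf(x,u)\,\mathrm{Ker}(H)\subseteq\mathrm{Ker}(H)$ for all $(x,u)$. Let $\ell=\sup_{(x,u)\in\mathbb{R}^n\times\mathbb{R}^p}\sup_{\eta\ne0}\|D_uf(x,u)\eta\|_{\mathbf{e},K}/\|\eta\|_{\mathcal U}$. The following are equivalent: (i) $HD_xf(x,u)\mathbf{e}\le -cH\mathbf{e}$ for all $(x,u)\in\mathbb{R}^n\times\mathbb{R}^p$; (ii) for any two trajectories $x_u(t),y_u(t)$ with the same continuous input $u:\mathbb{R}_{\ge0}\to\mathbb{R}^p$, $\|x_u(t)-y_u(t)\|_{\mathbf{e},K}\le e^{-ct}\|x_u(0)-y_u(0)\|_{\mathbf{e},K}$ for all $t\ge0$; (iii) for any two trajectories $x_u(t),y_v(t)$ with continuous inputs $u,v:\mathbb{R}_{\ge0}\to\mathbb{R}^p$, for all $t\ge0$, $\|x_u(t)-y_v(t)\|_{\mathbf{e},K}\le e^{-ct}\|x_u(0)-y_v(0)\|_{\mathbf{e},K}+\frac{\ell(1-e^{-ct})}{c}\sup_{\tau\in[0,t]}\|u(\tau)-v(\tau)\|_{\mathcal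 U}$ (with $\frac{1-e^{-ct}}{c}$ read as $t$ when $c=0$). Moreover, if $K$ is pointed, (i) holds for some $c>0$, and the input $u\in\mathbb{R}^p$ is constant, then (iv) the system has a unique globally exponentially stable equilibrium $x^*$, and (v) the functions $V_1(x)=\|\mathrm{diag}(H\mathbf{e})^{-1}H(x-x^* )\|_\infty$ and $V_2(x)=\|\mathrm{diag}(H\mathbf{e})^{-1}Hf(x,u)\|_\infty$ are global Lyapunov functions for the system.
   Context: A cone is a nonempty closed convex set $K\subseteq\mathbb{R}^n$ with $\lambda K\subseteq K$ for $\lambda\ge0$; proper: $\mathrm{int}(K)\ne\emptyset$; pointed: $K\cap(-K)=\{0\}$. Polyhedral with representation $(H,V)$: $K=\{x:Hx\ge0\}=\{Vy:y\ge0\}$. Preorder $x\preceq_Ky\iff y-x\in K$; interval $[x,y]_K=\{z:x\preceq_Kz\preceq_Ky\}$. Gauge seminorm: $\|v\|_{\mathbf{e},K}=\inf\{\lambda\ge0:v\in\lambda[-\mathbf{e},\mathbf{e}]_K\}$. The system is $K$-monotone if for all $x_0\preceq_Ky_0$ and every input signal $u$, the trajectories satisfy $x_u(t)\preceq_Ky_u(t)$ for all $t\ge0$. $\mathrm{diag}(\eta)$ is the diagonal matrix with diagonal $\eta$. *)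

theory Defs
  imports "HOL-Analysis.Analysis"
begin

definition hcone :: "real^'n^'m \<Rightarrow> (real^'n) set" where
  "hcone H = {x. \<forall>i. 0 \<le> (H *v x) $ i}"

definition vcone :: "real^'k^'n \<Rightarrow> (real^'n) set" where
  "vcone V = {V *v y | y. \<forall>j. 0 \<le> y $ j}"

definition is_cone :: "(real^'n) set \<Rightarrow> bool" where
  "is_cone K \<longleftrightarrow> K \<noteq> {} \<and> closed K \<and> convex K \<and> (\<forall>a\<ge>0. \<forall>x\<in>K. a *\<^sub>R x \<in> K)"

definition proper_cone :: "(real^'n) set \<Rightarrow> bool" where
  "proper_cone K \<longleftrightarrow> is_cone K \<and> interior K \<noteq> {}"

definition pointed_cone :: "(real^'n) set \<Rightarrow> bool" where
  "pointed_cone K \<longleftrightarrow> K \<inter> uminus ` K = {0}"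

definition proper_polyhedral_cone_rep :: "(real^'n) set \<Rightarrow> real^'n^'m \<Rightarrow> real^'k^'n \<Rightarrow> bool" where
  "proper_polyhedral_cone_rep K H V \<longleftrightarrow> proper_cone K \<and> K = hcone H \<and> K = vcone V"

definition cone_le :: "(real^'n) set \<Rightarrow> real^'n \<Rightarrow> real^'n \<Rightarrow> bool" where
  "cone_le K x y \<longleftrightarrow> y - x \<in> K"

definition cone_interval :: "(real^'n) set \<Rightarrow> real^'n \<Rightarrow> real^'n \<Rightarrow> (real^'n) set" where
  "cone_interval K x y = {z. cone_le K x z \<and> cone_le K z y}"

definition gauge_norm :: "(real^'n) set \<Rightarrow> real^'n \<Rightarrow> real^'n \<Rightarrow> real" where
  "gauge_norm K e v = Inf {a. 0 \<le> a \<and> v \<in> (\<lambda>z. a *\<^sub>R z) ` cone_interval K (-e) e}"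

definition is_norm :: "('a::real_vector \<Rightarrow> real) \<Rightarrow> bool" where
  "is_norm N \<longleftrightarrow> (\<forall>x. 0 \<le> N x) \<and> (\<forall>x. N x = 0 \<longleftrightarrow> x = 0) \<and>
     (\<forall>a x. N (a *\<^sub>R x) = \<bar>a\<bar> * N x) \<and> (\<forall>x y. N (x + y) \<le> N x + N y)"

definition trajectory :: "(real^'n \<Rightarrow> real^'p \<Rightarrow> real^'n) \<Rightarrow> (real \<Rightarrow> real^'p) \<Rightarrow> (real \<Rightarrow> real^'n) \<Rightarrow> bool" where
  "trajectory f u x \<longleftrightarrow> (\<forall>t\<ge>0. (x has_vector_derivative f (x t) (u t)) (at t within {0..}))"

definition monotone_sys :: "(real^'n \<Rightarrow> real^'p \<Rightarrow> real^'n) \<Rightarrow> (real^'n) set \<Rightarrow> bool" where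
  "monotone_sys f K \<longleftrightarrow> (\<forall>u x y. continuous_on {0..} u \<longrightarrow> trajectory f u x \<longrightarrow> trajectory f u y \<longrightarrow>
      cone_le K (x 0) (y 0) \<longrightarrow> (\<forall>t\<ge>0. cone_le K (x t) (y t)))"

definition phi :: "real \<Rightarrow> real \<Rightarrow> real" where
  "phi c t = (if c = 0 then t else (1 - exp (- c * t)) / c)"

definition glob_exp_stable :: "(real^'n \<Rightarrow> real^'p \<Rightarrow> real^'n) \<Rightarrow> real^'p \<Rightarrow> real^'n \<Rightarrow> bool" where
  "glob_exp_stable f u0 xs \<longleftrightarrow> (\<exists>M lam. M > 0 \<and> lam > 0 \<and>
     (\<forall>x. trajectory f (\<lambda>_. u0) x \<longrightarrow> (\<forall>t\<ge>0. norm (x t - xs) \<le> M * exp (- lam * t) * norm (x 0 - xs))))"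

definition global_lyapunov :: "(real^'n \<Rightarrow> real^'p \<Rightarrow> real^'n) \<Rightarrow> real^'p \<Rightarrow> real^'n \<Rightarrow> (real^'n \<Rightarrow> real) \<Rightarrow> bool" where
  "global_lyapunov f u0 xs W \<longleftrightarrow> continuous_on UNIV W \<and> W xs = 0 \<and> (\<forall>x. x \<noteq> xs \<longrightarrow> 0 < W x) \<and>
     (\<forall>M. \<exists>R. \<forall>x. R \<le> norm x \<longrightarrow> M \<le> W x) \<and>
     (\<forall>x. trajectory f (\<lambda>_. u0) x \<longrightarrow> (\<forall>s t. 0 \<le> s \<and> s < t \<and> x s \<noteq> xs \<longrightarrow> W (x t) < W (x s)))"

definition scaled_inf :: "real^'n^'m \<Rightarrow> real^'n \<Rightarrow> real^'n \<Rightarrow> real" where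
  "scaled_inf H e w = infnorm (\<chi> i. (H *v w) $ i / (H *v e) $ i)"

end

theory Submission
  imports Defs "HOL-Real_Asymp.Real_Asymp"
begin


lemma row_comp: "(H *v x) $ i = H $ i \<bullet> x"
  by (simp add: matrix_vector_mul_component)

lemma he_zero_row:
  fixes H :: "real^'n^'m"
  assumes "e \<in> interior (hcone H)" "(H *v e) $ i = 0"
  shows "(H *v v) $ i = 0"
proof -
  obtain r where r: "r > 0" "ball e r \<subseteq> hcone H"
    using assms(1) by (meson mem_interior)
  show ?thesis
  proof (cases "H $ i = 0")
    case True then show ?thesis by (simp add: row_comp)
  next
    case False
    define z where "z = e - (r / 2 / norm (H $ i)) *\<^sub>R H $ i"
    have "dist e z < r" using r False by (simp add: z_def dist_norm)
    then have "z \<in> hcone H" using r by auto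
    then have "0 \<le> (H *v z) $ i" by (simp add: hcone_def)
    also have "(H *v z) $ i = (H *v e) $ i - (r/2/norm (H$i)) * (H $ i \<bullet> H $ i)"
      by (simp add: z_def row_comp inner_diff_right)
    also have "\<dots> = - (r/2) * norm (H $ i)"
      using assms(2) False by (simp add: power2_norm_eq_inner[symmetric] power2_eq_square)
    finally have False using r False by (simp add: mult_le_0_iff)
    then show ?thesis by simp
  qed
qed

locale gn =
  fixes H :: "real^'n^'m" and e :: "real^'n"
  assumes He_nonneg: "\<And>i. 0 \<le> (H *v e) $ i"
    and He_zero: "\<And>i v. (H *v e) $ i = 0 \<Longrightarrow> (H *v v) $ i = 0"
begin

abbreviation N where "N \<equiv> scaled_inf H e"

lemma N_G1: "\<bar>(H *v v) $ i\<bar> \<le> N v * (H *v e) $ i"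
proof (cases "(H *v e) $ i = 0")
  case True then show ?thesis using He_zero by simp
next
  case False
  then have pos: "(H *v e) $ i > 0" using He_nonneg[of i] by simp
  have "\<bar>(H *v v) $ i / (H *v e) $ i\<bar> \<le> N v"
    unfolding scaled_inf_def using component_le_infnorm_cart[of "\<chi> i. (H *v v) $ i / (H *v e) $ i" i]
    by simp
  then show ?thesis using pos by (simp add: abs_div divide_le_eq)
qed

lemma N_nonneg: "0 \<le> N v"
  unfolding scaled_inf_def by (rule infnorm_pos_le)

lemma N_G2:
  assumes "0 \<le> a" "\<And>i. \<bar>(H *v v) $ i\<bar> \<le> a * (H *v e) $ i"
  shows "N v \<le> a"
  unfolding scaled_inf_def infnorm_cart
proof (rule cSup_least)
  show "{\<bar>(\<chi> i. (H *v v) $ i / (H *v e) $ i) $ i\<bar> |i. i \<in> UNIV} \<noteq> {}" by auto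
next
  fix x assume "x \<in> {\<bar>(\<chi> i. (H *v v) $ i / (H *v e) $ i) $ i\<bar> |i. i \<in> UNIV}"
  then obtain i where x: "x = \<bar>(H *v v) $ i / (H *v e) $ i\<bar>" by auto
  show "x \<le> a"
  proof (cases "(H *v e) $ i = 0")
    case True then show ?thesis using x assms by simp
  next
    case False
    then have pos: "(H *v e) $ i > 0" using He_nonneg[of i] by simp
    then show ?thesis using x assms(2)[of i] by (simp add: abs_div divide_le_eq mult.commute)
  qed
qed

lemma N_vec_eq: "(\<chi> i. (H *v v) $ i / (H *v e) $ i) = (\<chi> i. (H *v v) $ i / (H *v e) $ i)" ..

lemma N_scale: "N (a *\<^sub>R v) = \<bar>a\<bar> * N v"
proof -
  have "(\<chi> i. (H *v (a *\<^sub>R v)) $ i / (H *v e) $ i) = a *\<^sub>R (\<chi> i. (H *v v) $ i / (H *v e) $ i)"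
    by (simp add: vec_eq_iff matrix_vector_mult_scaleR)
  then show ?thesis unfolding scaled_inf_def by (simp add: infnorm_mul)
qed

lemma N_add: "N (v + w) \<le> N v + N w"
proof -
  have "(\<chi> i. (H *v (v + w)) $ i / (H *v e) $ i) = (\<chi> i. (H *v v) $ i / (H *v e) $ i) + (\<chi> i. (H *v w) $ i / (H *v e) $ i)"
    by (simp add: vec_eq_iff matrix_vector_right_distrib add_divide_distrib)
  then show ?thesis unfolding scaled_inf_def by (simp add: infnorm_triangle)
qed

lemma N_neg: "N (- v) = N v"
  using N_scale[of "-1" v] by simp

lemma N_minus_commute: "N (v - w) = N (w - v)"
  using N_neg[of "v - w"] by simp

lemma N_diff: "N (v - w) \<le> N v + N w"
  using N_add[of v "- w"] N_neg[of w] by simp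

lemma N_zero[simp]: "N 0 = 0"
  using N_scale[of 0 0] by simp

lemma N_eq0_iff: "N v = 0 \<longleftrightarrow> H *v v = 0"
proof
  assume "N v = 0"
  then have "\<And>i. \<bar>(H *v v) $ i\<bar> \<le> 0" using N_G1[of v] by (metis mult_zero_left)
  then show "H *v v = 0" by (simp add: vec_eq_iff)
next
  assume "H *v v = 0"
  then show "N v = 0" using N_G2[of 0 v] N_nonneg[of v] by simp
qed

lemma continuous_on_N: "continuous_on S N"
proof -
  have "continuous_on S (\<lambda>v. infnorm (\<chi> i. (H $ i \<bullet> v) * inverse ((H *v e) $ i)))"
    by (intro continuous_intros continuous_on_vec_lambda)
  then show ?thesis unfolding scaled_inf_def by (simp add: row_comp divide_inverse)
qed

lemma N_e_le: "N e \<le> 1"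
  by (rule N_G2) (auto simp: He_nonneg)

end

lemma gauge_eq:
  fixes H :: "real^'n^'m"
  assumes K: "K = hcone H" and eK: "e \<in> interior K"
  shows "gauge_norm K e v = scaled_inf H e v"
proof -
  interpret gn H e
  proof
    show "0 \<le> (H *v e) $ i" for i using interior_subset[of K] eK K by (auto simp: hcone_def)
    show "(H *v e) $ i = 0 \<Longrightarrow> (H *v v) $ i = 0" for i v using he_zero_row eK K by blast
  qed
  define A where "A = {a. 0 \<le> a \<and> v \<in> (\<lambda>z. a *\<^sub>R z) ` cone_interval K (-e) e}"
  have memA: "a \<in> A" if "a > 0" "\<And>i. \<bar>(H *v v) $ i\<bar> \<le> a * (H *v e) $ i" for a
  proof -
    have h: "- (a * (H *v e) $ i) \<le> (H *v v) $ i \<and> (H *v v) $ i \<le> a * (H *v e) $ i" for i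
      using that(2)[of i] by (simp add: abs_le_iff)
    have "(1/a) *\<^sub>R v \<in> cone_interval K (-e) e"
      using that(1) h unfolding cone_interval_def cone_le_def K hcone_def
      by (auto simp: matrix_vector_mult_diff_distrib matrix_vector_right_distrib matrix_vector_mult_scaleR
           abs_le_iff field_simps) (smt (verit) h)
    then show ?thesis unfolding A_def using that by (auto intro!: image_eqI[of _ _ "(1/a) *\<^sub>R v"])
  qed
  have lowA: "N v \<le> a" if "a \<in> A" for a
  proof -
    from that obtain z where a: "0 \<le> a" and z: "z \<in> cone_interval K (-e) e" and v: "v = a *\<^sub>R z"
      unfolding A_def by auto
    have "\<bar>(H *v z) $ i\<bar> \<le> (H *v e) $ i" for i
      using z unfolding cone_interval_def cone_le_def K hcone_def
      apply (auto simp: matrix_vector_mult_diff_distrib matrix_vector_right_distrib abs_le_iff)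
      by (metis add.commute le_add_same_cancel2 neg_le_iff_le add_le_cancel_right diff_ge_0_iff_ge minus_add_cancel)
    then have "\<bar>(H *v v) $ i\<bar> \<le> a * (H *v e) $ i" for i
      using a by (simp add: v matrix_vector_mult_scaleR abs_mult mult_left_mono)
    then show ?thesis by (rule N_G2[OF a])
  qed
  have bnd: "\<bar>(H *v v) $ i\<bar> \<le> (N v + d) * (H *v e) $ i" if "d \<ge> 0" for d i
  proof -
    have "N v * (H *v e) $ i \<le> (N v + d) * (H *v e) $ i"
      by (rule mult_right_mono) (use that He_nonneg in auto)
    then show ?thesis using N_G1[of v i] by linarith
  qed
  have ge: "N v \<le> Inf A"
  proof (rule cInf_greatest)
    show "A \<noteq> {}" using memA[of "N v + 1"] N_nonneg[of v] bnd[of 1] by force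
  qed (rule lowA)
  have le: "Inf A \<le> N v"
  proof (rule field_le_epsilon)
    fix d :: real assume d: "d > 0"
    have "N v + d \<in> A"
      using memA[of "N v + d"] N_nonneg[of v] bnd[of d] d by force
    moreover have "bdd_below A" using lowA by (meson bdd_below.unfold)
    ultimately show "Inf A \<le> N v + d" by (rule cInf_lower)
  qed
  show ?thesis unfolding gauge_norm_def A_def[symmetric] using ge le by simp
qed




lemma phi_deriv: "(phi c has_real_derivative exp (- c * s)) (at s within S)"
proof (cases "c = 0")
  case True
  then have "phi c = (\<lambda>t. t)" by (auto simp: phi_def)
  then show ?thesis using True by (auto intro!: derivative_eq_intros)
next
  case False
  then have "phi c = (\<lambda>t. (1 - exp (- c * t)) / c)" by (auto simp: phi_def fun_eq_iff)
  then show ?thesis using False by (auto intro!: derivative_eq_intros)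
qed

lemma phi_id: "1 - c * phi c t = exp (- c * t)"
  by (auto simp: phi_def)

lemma phi_0[simp]: "phi c 0 = 0"
  by (simp add: phi_def)

lemma phi_nonneg: "t \<ge> 0 \<Longrightarrow> phi c t \<ge> 0"
proof (cases "c = 0")
  case False
  assume t: "t \<ge> 0"
  show ?thesis
  proof (cases "c > 0")
    case True
    then have "exp (- c * t) \<le> 1" using t by (simp add: mult_nonneg_nonneg)
    then show ?thesis using True by (simp add: phi_def)
  next
    case c: False
    then have "exp (- c * t) \<ge> 1" using t False by (simp add: mult_nonpos_nonneg)
    then show ?thesis using c False by (simp add: phi_def divide_nonpos_neg)
  qed
qed (simp add: phi_def)

lemma phi_pos: "t > 0 \<Longrightarrow> phi c t > 0"
proof (cases "c = 0")
  case False
  assume t: "t > 0"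
  show ?thesis
  proof (cases "c > 0")
    case True
    then have "exp (- c * t) < 1" using t by simp
    then show ?thesis using True by (simp add: phi_def)
  next
    case c: False
    then have "exp (- c * t) > 1" using t False by (simp add: mult_neg_pos)
    then show ?thesis using c False by (simp add: phi_def divide_neg_neg)
  qed
qed (simp add: phi_def)

lemma comparison:
  fixes \<rho> \<rho>' :: "'k::finite \<Rightarrow> real \<Rightarrow> real" and E :: "'k \<Rightarrow> real" and g :: "real \<Rightarrow> real"
  assumes E: "\<And>k. E k \<ge> 0"
   and der: "\<And>k t. t \<in> {0..T} \<Longrightarrow> (\<rho> k has_real_derivative \<rho>' k t) (at t within {0..})"
   and g0: "\<And>t. t \<in> {0..T} \<Longrightarrow> g t \<ge> 0"
   and g1: "\<And>t k. t \<in> {0..T} \<Longrightarrow> \<rho> k t \<le> g t * E k"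
   and g2: "\<And>t a. t \<in> {0..T} \<Longrightarrow> a \<ge> 0 \<Longrightarrow> (\<And>k. \<rho> k t \<le> a * E k) \<Longrightarrow> g t \<le> a"
   and hyp: "\<And>t k. t \<in> {0..T} \<Longrightarrow> E k > 0 \<Longrightarrow> \<rho> k t = g t * E k \<Longrightarrow> \<rho>' k t \<le> (- c * g t + \<beta>) * E k"
   and \<beta>: "\<beta> \<ge> 0"
   and t: "t \<in> {0..T}"
  shows "g t \<le> exp (- c * t) * g 0 + \<beta> * phi c t"
proof -
  have T: "0 \<le> T" using t by simp
  have main: "g t \<le> exp (- c * t) * g 0 + \<beta> * phi c t + \<epsilon> * (exp (- c * t) * (1 + t))"
    if \<epsilon>: "\<epsilon> > 0" for \<epsilon>
  proof -
    define b where "b s = exp (- c * s) * g 0 + \<beta> * phi c s + \<epsilon> * (exp (- c * s) * (1 + s))" for s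
    have bder: "(b has_real_derivative (- c * b s + \<beta> + \<epsilon> * exp (- c * s))) (at s within S)" for s S
    proof -
      have "(b has_real_derivative (- c * exp (- c * s) * g 0 + \<beta> * exp (- c * s)
             + \<epsilon> * (- c * exp (- c * s) * (1 + s) + exp (- c * s)))) (at s within S)"
        unfolding b_def by (auto intro!: derivative_eq_intros phi_deriv simp: algebra_simps)
      moreover have "- c * exp (- c * s) * g 0 + \<beta> * exp (- c * s)
             + \<epsilon> * (- c * exp (- c * s) * (1 + s) + exp (- c * s)) = - c * b s + \<beta> + \<epsilon> * exp (- c * s)"
      proof -
        have "\<beta> * exp (- c * s) = \<beta> - c * (\<beta> * phi c s)"
          using phi_id[of c s] by (metis mult.left_commute right_diff_distrib' mult.right_neutral)
        then show ?thesis unfolding b_def by (simp add: algebra_simps)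
      qed
      ultimately show ?thesis by simp
    qed
    have bcont: "continuous_on S b" for S
      unfolding b_def
      by (intro continuous_intros) (meson DERIV_isCont continuous_at_imp_continuous_on phi_deriv)
    have b_nonneg: "b s \<ge> 0" if "s \<ge> 0" for s
      unfolding b_def using g0[of 0] T that \<beta> \<epsilon> phi_nonneg[OF that, of c]
      by (intro add_nonneg_nonneg mult_nonneg_nonneg) auto
    have rcont: "continuous_on {0..T} (\<rho> k)" for k
    proof -
      have "continuous (at s within {0..T}) (\<rho> k)" if "s \<in> {0..T}" for s
        using der[OF that, of k] by (meson DERIV_continuous atLeastAtMost_iff atLeast_iff continuous_within_subset subsetI)
      then show ?thesis by (simp add: continuous_on_eq_continuous_within)
    qed
    define S where "S = (\<Union>k\<in>{k. E k > 0}. {0..T} \<inter> (\<lambda>s. \<rho> k s - b s * E k) -` {0..})"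
    have claim: "\<forall>s\<in>{0..T}. \<forall>k. E k > 0 \<longrightarrow> \<rho> k s < b s * E k"
    proof (rule ccontr)
      assume "\<not> ?thesis"
      then have Sne: "S \<noteq> {}" unfolding S_def by force
      have Sclosed: "closed S" unfolding S_def
      proof (rule closed_UN)
        show "finite {k. E k > 0}" by simp
        show "\<forall>k\<in>{k. E k > 0}. closed ({0..T} \<inter> (\<lambda>s. \<rho> k s - b s * E k) -` {0..})"
        proof
          fix k
          have "continuous_on {0..T} (\<lambda>s. \<rho> k s - b s * E k)"
            by (intro continuous_on_diff continuous_on_mult_right rcont bcont)
          then show "closed ({0..T} \<inter> (\<lambda>s. \<rho> k s - b s * E k) -` {0..})"
            by (rule continuous_closed_preimage) auto
        qed
      qed
      have Ssub: "S \<subseteq> {0..T}" unfolding S_def by auto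
      define s0 where "s0 = Inf S"
      have s0S: "s0 \<in> S" unfolding s0_def
        using Sne Sclosed Ssub by (intro closed_contains_Inf) (auto intro: bdd_below_mono[OF bdd_below_Icc])
      then have s0T: "s0 \<in> {0..T}" using Ssub by auto
      have before: "\<rho> k s < b s * E k" if "0 \<le> s" "s < s0" "E k > 0" for s k
      proof (rule ccontr)
        assume "\<not> ?thesis"
        then have "s \<in> S" unfolding S_def using that s0T by auto
        then have "s0 \<le> s" unfolding s0_def by (meson Ssub bdd_below_Icc bdd_below_mono cInf_lower)
        then show False using that by simp
      qed
      have "0 \<notin> S"
      proof
        assume "0 \<in> S"
        then obtain k where k: "E k > 0" "b 0 * E k \<le> \<rho> k 0" unfolding S_def by auto
        have "\<rho> k 0 \<le> g 0 * E k" using g1[of 0 k] T by simp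
        moreover have "b 0 = g 0 + \<epsilon>" by (simp add: b_def)
        moreover have "\<epsilon> * E k > 0" using k \<epsilon> by simp
        ultimately show False using k by (simp add: distrib_right)
      qed
      then have s0pos: "s0 > 0" using s0S s0T by (cases "s0 = 0") auto
      obtain k where k: "E k > 0" "b s0 * E k \<le> \<rho> k s0" using s0S unfolding S_def by auto
      define F where "F = at s0 within {0..<s0}"
      have Fnb: "F \<noteq> bot" unfolding F_def using s0pos by (simp add: trivial_limit_within islimpt_Ico)
      have evF: "eventually (\<lambda>s. 0 \<le> s \<and> s < s0) F"
        unfolding F_def by (simp add: eventually_at_filter)
      have le_all: "\<rho> k' s0 \<le> b s0 * E k'" for k'
      proof (cases "E k' > 0")
        case False
        then have "E k' = 0" using E[of k'] by simp
        then show ?thesis using g1[OF s0T, of k'] by simp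
      next
        case True
        have "((\<lambda>s. \<rho> k' s - b s * E k') \<longlongrightarrow> \<rho> k' s0 - b s0 * E k') F"
        proof -
          have "continuous (at s0 within {0..<s0}) (\<lambda>s. \<rho> k' s - b s * E k')"
            using der[OF s0T, of k'] bder[of s0 "{0..<s0}"]
            by (intro continuous_intros) (meson DERIV_continuous atLeastLessThan_iff atLeast_iff continuous_within_subset subsetI)+
          then show ?thesis unfolding F_def by (simp add: continuous_within)
        qed
        moreover have "eventually (\<lambda>s. \<rho> k' s - b s * E k' \<le> 0) F"
          using evF by eventually_elim (use before True in force)
        ultimately have "\<rho> k' s0 - b s0 * E k' \<le> 0" using Fnb by (rule tendsto_upperbound)
        then show ?thesis by simp
      qed
      have eqk: "\<rho> k s0 = b s0 * E k" using k le_all[of k] by simp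
      have gle: "g s0 \<le> b s0" using g2[OF s0T b_nonneg le_all] s0pos by simp
      have gge: "b s0 \<le> g s0" using g1[OF s0T, of k] eqk k(1) by simp
      have geq: "g s0 = b s0" using gle gge by simp
      have hk: "\<rho>' k s0 \<le> (- c * b s0 + \<beta>) * E k"
        using hyp[OF s0T k(1)] eqk geq by simp
      define D where "D = \<rho>' k s0 - (- c * b s0 + \<beta> + \<epsilon> * exp (- c * s0)) * E k"
      have "\<epsilon> * exp (- c * s0) * E k > 0" using \<epsilon> k(1) by simp
      then have Dneg: "D < 0" unfolding D_def using hk by (simp add: distrib_right)
      have dk: "(\<rho> k has_real_derivative \<rho>' k s0) (at s0 within {0..<s0})"
        by (rule has_field_derivative_subset[OF der[OF s0T, of k]]) auto
      have "((\<lambda>s. \<rho> k s - b s * E k) has_real_derivative D) (at s0 within {0..<s0})"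
        unfolding D_def
        using dk bder[of s0 "{0..<s0}"]
        by (auto intro!: derivative_eq_intros)
      then have "((\<lambda>s. ((\<rho> k s - b s * E k) - (\<rho> k s0 - b s0 * E k)) / (s - s0)) \<longlongrightarrow> D) F"
        unfolding F_def by (simp add: has_field_derivative_iff)
      moreover have "eventually (\<lambda>s. 0 \<le> ((\<rho> k s - b s * E k) - (\<rho> k s0 - b s0 * E k)) / (s - s0)) F"
        using evF
      proof eventually_elim
        case (elim s)
        then have "\<rho> k s - b s * E k < 0" using before k(1) by force
        then show ?case using eqk elim by (simp add: divide_nonpos_neg)
      qed
      ultimately have "0 \<le> D" using Fnb by (rule tendsto_lowerbound)
      then show False using Dneg by simp
    qed
    have "\<rho> k t \<le> b t * E k" for k
    proof (cases "E k > 0")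
      case True then show ?thesis using claim t by force
    next
      case False then have "E k = 0" using E[of k] by simp
      then show ?thesis using g1[OF t, of k] by simp
    qed
    then have "g t \<le> b t"
      using g2[OF t b_nonneg] t by simp
    then show ?thesis by (simp add: b_def)
  qed
  show ?thesis
  proof (rule field_le_epsilon)
    fix d :: real assume d: "d > 0"
    define C where "C = exp (- c * t) * (1 + t)"
    have C: "C > 0" unfolding C_def using t by simp
    have "g t \<le> exp (- c * t) * g 0 + \<beta> * phi c t + (d / C) * C"
      using main[of "d / C"] d C unfolding C_def by simp
    then show "g t \<le> exp (- c * t) * g 0 + \<beta> * phi c t + d" using C by simp
  qed
qed




lemma row_deriv:
  assumes "((x::real\<Rightarrow>real^'n) has_vector_derivative D) (at t within S)"
  shows "((\<lambda>t. (H *v x t) $ i) has_real_derivative (H *v D) $ i) (at t within S)"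
  unfolding matrix_vector_mul_component has_real_derivative_iff_has_vector_derivative
  by (rule bounded_linear.has_vector_derivative[OF bounded_linear_inner_right assms])

lemma deriv_nonneg_at0:
  assumes d: "(\<psi> has_real_derivative D) (at 0 within {0..})"
    and ge: "\<And>t. t \<ge> 0 \<Longrightarrow> \<psi> 0 \<le> \<psi> t"
  shows "D \<ge> 0"
proof -
  have "((\<lambda>t. (\<psi> t - \<psi> 0) / (t - 0)) \<longlongrightarrow> D) (at_right 0)"
    using d by (simp add: has_field_derivative_iff at_within_Ici_at_right)
  moreover have "eventually (\<lambda>t. 0 \<le> (\<psi> t - \<psi> 0) / (t - 0)) (at_right (0::real))"
    by (simp add: eventually_at_right_less ge eventually_mono[OF eventually_at_right_less])
  ultimately show ?thesis by (rule tendsto_lowerbound) simp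
qed

locale sys = 
  fixes f :: "real^'n \<Rightarrow> real^'p \<Rightarrow> real^'n"
    and Dx :: "real^'n \<Rightarrow> real^'p \<Rightarrow> real^'n^'n"
    and Du :: "real^'n \<Rightarrow> real^'p \<Rightarrow> real^'p^'n"
    and K :: "(real^'n) set" and H :: "real^'n^'m" 
    and e :: "real^'n" and nU :: "real^'p \<Rightarrow> real"
  assumes deriv: "\<And>x u. ((\<lambda>z. f (fst z) (snd z)) has_derivative
                      (\<lambda>h. Dx x u *v fst h + Du x u *v snd h)) (at (x, u))"
    and exists_sol: "\<And>u x0. continuous_on {0..} u \<Longrightarrow> \<exists>x. trajectory f u x \<and> x 0 = x0"
    and KH: "K = hcone H"
    and e_int: "e \<in> interior K"
    and normU: "is_norm nU"
    and mono: "monotone_sys f K"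
begin

sublocale gn H e
proof
  show "0 \<le> (H *v e) $ i" for i using interior_subset[of K] e_int KH by (auto simp: hcone_def)
  show "(H *v e) $ i = 0 \<Longrightarrow> (H *v v) $ i = 0" for i v using he_zero_row e_int KH by blast
qed

lemma gauge: "gauge_norm K e v = N v"
  using gauge_eq[OF KH e_int] .

lemma traj_deriv: "trajectory f u x \<Longrightarrow> t \<ge> 0 \<Longrightarrow> (x has_vector_derivative f (x t) (u t)) (at t within {0..})"
  by (simp add: trajectory_def)

lemma traj_cont: "trajectory f u x \<Longrightarrow> continuous_on {0..} x"
  by (auto simp: continuous_on_eq_continuous_within intro!: has_vector_derivative_continuous traj_deriv)

lemma traj_row: "trajectory f u x \<Longrightarrow> t \<ge> 0 \<Longrightarrow>
   ((\<lambda>t. (H *v x t) $ i) has_real_derivative (H *v f (x t) (u t)) $ i) (at t within {0..})"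
  by (rule row_deriv, rule traj_deriv)

lemma traj_shift:
  assumes x: "trajectory f u x" and h: "h \<ge> 0"
  shows "trajectory f (\<lambda>t. u (t + h)) (\<lambda>t. x (t + h))"
  unfolding trajectory_def
proof (intro allI impI)
  fix t :: real assume t: "t \<ge> 0"
  have d1: "((\<lambda>t. t + h) has_vector_derivative 1) (at t within {0..})"
    by (auto intro!: derivative_eq_intros)
  have d2: "(x has_vector_derivative f (x (t + h)) (u (t + h))) (at (t + h) within (\<lambda>t. t + h) ` {0..})"
    by (rule has_vector_derivative_within_subset[OF traj_deriv[OF x]]) (use t h in auto)
  show "((\<lambda>t. x (t + h)) has_vector_derivative f (x (t + h)) (u (t + h))) (at t within {0..})"
    using vector_diff_chain_within[OF d1 d2] by (simp add: o_def)
qed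

lemma traj_const: "f a u0 = 0 \<Longrightarrow> trajectory f (\<lambda>_. u0) (\<lambda>_. a)"
  by (simp add: trajectory_def)

lemma fx_deriv: "((\<lambda>s. f (a + s *\<^sub>R w) u) has_vector_derivative Dx (a + s *\<^sub>R w) u *v w) (at s)"
proof -
  have g: "((\<lambda>s. (a + s *\<^sub>R w, u)) has_derivative (\<lambda>h. (h *\<^sub>R w, 0))) (at s)"
    by (auto intro!: derivative_eq_intros)
  have "((\<lambda>z. f (fst z) (snd z)) \<circ> (\<lambda>s. (a + s *\<^sub>R w, u)) has_derivative
        (\<lambda>h. Dx (a + s *\<^sub>R w) u *v fst h + Du (a + s *\<^sub>R w) u *v snd h) \<circ> (\<lambda>h. (h *\<^sub>R w, 0))) (at s)"
    by (rule diff_chain_at[OF g]) (use deriv in simp)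
  then show ?thesis
    by (simp add: has_vector_derivative_def o_def matrix_vector_mult_scaleR)
qed

lemma fu_deriv: "((\<lambda>s. f y (a + s *\<^sub>R w)) has_vector_derivative Du y (a + s *\<^sub>R w) *v w) (at s)"
proof -
  have g: "((\<lambda>s. (y, a + s *\<^sub>R w)) has_derivative (\<lambda>h. (0, h *\<^sub>R w))) (at s)"
    by (auto intro!: derivative_eq_intros)
  have "((\<lambda>z. f (fst z) (snd z)) \<circ> (\<lambda>s. (y, a + s *\<^sub>R w)) has_derivative
        (\<lambda>h. Dx y (a + s *\<^sub>R w) *v fst h + Du y (a + s *\<^sub>R w) *v snd h) \<circ> (\<lambda>h. (0, h *\<^sub>R w))) (at s)"
    by (rule diff_chain_at[OF g]) (use deriv in simp)
  then show ?thesis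
    by (simp add: has_vector_derivative_def o_def matrix_vector_mult_scaleR)
qed

lemma f_cont: "continuous_on S (\<lambda>x. f x u)"
proof -
  have "isCont (\<lambda>x. f x u) x" for x
  proof -
    have g: "((\<lambda>x. (x, u)) has_derivative (\<lambda>h. (h, 0))) (at x)"
      by (auto intro!: derivative_eq_intros)
    have "((\<lambda>z. f (fst z) (snd z)) \<circ> (\<lambda>x. (x, u)) has_derivative
          (\<lambda>h. Dx x u *v fst h + Du x u *v snd h) \<circ> (\<lambda>h. (h, 0))) (at x)"
      by (rule diff_chain_at[OF g]) (use deriv in simp)
    then show ?thesis by (auto dest: has_derivative_continuous simp: o_def)
  qed
  then show ?thesis by (simp add: continuous_at_imp_continuous_on)
qed

lemma QM:
  assumes w: "\<And>j. 0 \<le> (H *v w) $ j" and wi: "(H *v w) $ i = 0"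
  shows "(H *v f a u) $ i \<le> (H *v f (a + w) u) $ i"
proof -
  have uc: "continuous_on {0..} (\<lambda>_::real. u)" by simp
  obtain X where X: "trajectory f (\<lambda>_. u) X" "X 0 = a" using exists_sol[OF uc] by blast
  obtain Y where Y: "trajectory f (\<lambda>_. u) Y" "Y 0 = a + w" using exists_sol[OF uc] by blast
  have le: "cone_le K (X 0) (Y 0)" using w X Y by (simp add: cone_le_def KH hcone_def)
  have "cone_le K (X t) (Y t)" if "t \<ge> 0" for t
    using mono uc X Y le that unfolding monotone_sys_def by blast
  then have ge: "0 \<le> (H *v Y t) $ i - (H *v X t) $ i" if "t \<ge> 0" for t
    using that by (auto simp: cone_le_def KH hcone_def matrix_vector_mult_diff_distrib)
  have d: "((\<lambda>t. (H *v Y t) $ i - (H *v X t) $ i) has_real_derivative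
           (H *v f (Y 0) u) $ i - (H *v f (X 0) u) $ i) (at 0 within {0..})"
    by (intro DERIV_diff traj_row[OF Y(1), simplified] traj_row[OF X(1), simplified]) simp_all
  have "(H *v Y 0) $ i - (H *v X 0) $ i = 0" using X Y wi by (simp add: matrix_vector_right_distrib)
  then have "(H *v f (Y 0) u) $ i - (H *v f (X 0) u) $ i \<ge> 0"
    using deriv_nonneg_at0[OF d] ge by simp
  then show ?thesis using X Y by simp
qed

end

context sys begin

lemma key:
  assumes cI: "\<And>x u i. (H *v (Dx x u *v e)) $ i \<le> - c * (H *v e) $ i"
    and lam: "lm \<ge> 0" and le: "\<And>j. (H *v (a - b)) $ j \<le> lm * (H *v e) $ j"
    and act: "(H *v (a - b)) $ i = lm * (H *v e) $ i"
  shows "(H *v (f a u - f b u)) $ i \<le> - c * lm * (H *v e) $ i"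
proof -
  define w where "w = lm *\<^sub>R e - (a - b)"
  have w: "0 \<le> (H *v w) $ j" for j using le[of j]
    by (simp add: w_def matrix_vector_mult_diff_distrib matrix_vector_mult_scaleR)
  have wi: "(H *v w) $ i = 0" using act
    by (simp add: w_def matrix_vector_mult_diff_distrib matrix_vector_mult_scaleR)
  have aw: "a + w = b + 1 *\<^sub>R (lm *\<^sub>R e)" by (simp add: w_def)
  have q: "(H *v f a u) $ i \<le> (H *v f (b + 1 *\<^sub>R (lm *\<^sub>R e)) u) $ i"
    using QM[OF w wi, of a u] aw by simp
  define \<phi> where "\<phi> s = (H *v f (b + s *\<^sub>R (lm *\<^sub>R e)) u) $ i" for s
  have d: "(\<phi> has_real_derivative (H *v (Dx (b + s *\<^sub>R (lm *\<^sub>R e)) u *v (lm *\<^sub>R e))) $ i) (at s)" for s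
    unfolding \<phi>_def by (rule row_deriv[OF fx_deriv])
  obtain z where z: "\<phi> 1 - \<phi> 0 = (1 - 0) * (H *v (Dx (b + z *\<^sub>R (lm *\<^sub>R e)) u *v (lm *\<^sub>R e))) $ i"
    using MVT2[of 0 1 \<phi>, OF _ d] by auto
  have "(H *v (Dx (b + z *\<^sub>R (lm *\<^sub>R e)) u *v (lm *\<^sub>R e))) $ i
        = lm * (H *v (Dx (b + z *\<^sub>R (lm *\<^sub>R e)) u *v e)) $ i"
    by (simp add: matrix_vector_mult_scaleR)
  also have "\<dots> \<le> lm * (- c * (H *v e) $ i)"
    by (rule mult_left_mono[OF cI lam])
  finally have "\<phi> 1 - \<phi> 0 \<le> - c * lm * (H *v e) $ i" using z by (simp add: mult_ac)
  moreover have "\<phi> 0 = (H *v f b u) $ i" by (simp add: \<phi>_def)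
  ultimately show ?thesis using q unfolding \<phi>_def by (simp add: matrix_vector_mult_diff_distrib)
qed

lemma nU_0: "nU 0 = 0" using normU by (simp add: is_norm_def)
lemma nU_nonneg: "nU x \<ge> 0" using normU by (simp add: is_norm_def)
lemma nU_eq0: "nU x = 0 \<longleftrightarrow> x = 0" using normU by (simp add: is_norm_def)

lemma input_bound:
  assumes L: "\<And>x u \<eta>. \<eta> \<noteq> 0 \<Longrightarrow> N (Du x u *v \<eta>) \<le> L * nU \<eta>"
  shows "\<bar>(H *v (f y u1 - f y u2)) $ i\<bar> \<le> L * nU (u1 - u2) * (H *v e) $ i"
proof (cases "u1 = u2")
  case True then show ?thesis by (simp add: nU_0)
next
  case False
  define \<phi> where "\<phi> s = (H *v f y (u2 + s *\<^sub>R (u1 - u2))) $ i" for s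
  have d: "(\<phi> has_real_derivative (H *v (Du y (u2 + s *\<^sub>R (u1 - u2)) *v (u1 - u2))) $ i) (at s)" for s
    unfolding \<phi>_def by (rule row_deriv[OF fu_deriv])
  obtain z where z: "\<phi> 1 - \<phi> 0 = (1 - 0) * (H *v (Du y (u2 + z *\<^sub>R (u1 - u2)) *v (u1 - u2))) $ i"
    using MVT2[of 0 1 \<phi>, OF _ d] by auto
  have "\<bar>(H *v (Du y (u2 + z *\<^sub>R (u1 - u2)) *v (u1 - u2))) $ i\<bar>
        \<le> N (Du y (u2 + z *\<^sub>R (u1 - u2)) *v (u1 - u2)) * (H *v e) $ i" by (rule N_G1)
  also have "\<dots> \<le> L * nU (u1 - u2) * (H *v e) $ i"
    by (rule mult_right_mono[OF L He_nonneg]) (use False in simp)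
  finally show ?thesis using z unfolding \<phi>_def by (simp add: matrix_vector_mult_diff_distrib)
qed

lemma estimate:
  assumes cI: "\<And>x u i. (H *v (Dx x u *v e)) $ i \<le> - c * (H *v e) $ i"
    and x: "trajectory f u x" and y: "trajectory f v y" and \<beta>: "\<beta> \<ge> 0"
    and inb: "\<And>\<tau> b i. \<tau> \<in> {0..T} \<Longrightarrow> \<bar>(H *v (f b (u \<tau>) - f b (v \<tau>))) $ i\<bar> \<le> \<beta> * (H *v e) $ i"
    and t: "t \<in> {0..T}"
  shows "N (x t - y t) \<le> exp (- c * t) * N (x 0 - y 0) + \<beta> * phi c t"
proof -
  define sg :: "bool \<Rightarrow> real" where "sg s = (if s then 1 else -1)" for s
  define \<rho> :: "'m \<times> bool \<Rightarrow> real \<Rightarrow> real" where "\<rho> k t = sg (snd k) * (H *v (x t - y t)) $ fst k" for k t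
  define \<rho>' :: "'m \<times> bool \<Rightarrow> real \<Rightarrow> real" where
    "\<rho>' k t = sg (snd k) * (H *v (f (x t) (u t) - f (y t) (v t))) $ fst k" for k t
  define E :: "'m \<times> bool \<Rightarrow> real" where "E k = (H *v e) $ fst k" for k
  define g where "g t = N (x t - y t)" for t
  have abs_sg: "\<bar>sg s * r\<bar> = \<bar>r\<bar>" for s r by (simp add: sg_def)
  have "g t \<le> exp (- c * t) * g 0 + \<beta> * phi c t"
  proof (rule comparison[of E T \<rho> \<rho>' g c \<beta> t])
    show "0 \<le> E k" for k by (simp add: E_def He_nonneg)
    show "(\<rho> k has_real_derivative \<rho>' k t) (at t within {0..})" if "t \<in> {0..T}" for k t
      unfolding \<rho>_def \<rho>'_def matrix_vector_mult_diff_distrib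
      using that by (auto intro!: derivative_eq_intros traj_row[OF x] traj_row[OF y])
    show "0 \<le> g t" for t by (simp add: g_def N_nonneg)
    show "\<rho> k t \<le> g t * E k" for t k
      unfolding \<rho>_def g_def E_def using N_G1[of "x t - y t" "fst k"] abs_sg[of "snd k"]
      by (metis abs_ge_self order_trans)
    show "g t \<le> a" if "a \<ge> 0" "\<And>k. \<rho> k t \<le> a * E k" for t a
      unfolding g_def
    proof (rule N_G2[OF that(1)])
      fix i
      show "\<bar>(H *v (x t - y t)) $ i\<bar> \<le> a * (H *v e) $ i"
        using that(2)[of "(i, True)"] that(2)[of "(i, False)"] by (simp add: \<rho>_def E_def sg_def abs_le_iff)
    qed
    show "\<rho>' k t \<le> (- c * g t + \<beta>) * E k" if tT: "t \<in> {0..T}" and "0 < E k" and act: "\<rho> k t = g t * E k" for t k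
    proof -
      obtain i s where k: "k = (i, s)" by force
      have lam: "g t \<ge> 0" by (simp add: g_def N_nonneg)
      show ?thesis
      proof (cases s)
        case True
        have le: "(H *v (x t - y t)) $ j \<le> g t * (H *v e) $ j" for j
          using N_G1[of "x t - y t" j] unfolding g_def by simp
        have "(H *v (f (x t) (u t) - f (y t) (u t))) $ i \<le> - c * g t * (H *v e) $ i"
          by (rule key[OF cI lam le]) (use act k True in \<open>simp add: \<rho>_def E_def sg_def\<close>)
        moreover have "(H *v (f (y t) (u t) - f (y t) (v t))) $ i \<le> \<beta> * (H *v e) $ i"
          using inb[OF tT, of "y t" i] by simp
        ultimately show ?thesis using k True
          by (simp add: \<rho>'_def E_def sg_def matrix_vector_mult_diff_distrib algebra_simps)
      next
        case False
        have le: "(H *v (y t - x t)) $ j \<le> g t * (H *v e) $ j" for j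
          using N_G1[of "y t - x t" j] N_minus_commute[of "x t" "y t"] unfolding g_def by simp
        have "(H *v (f (y t) (u t) - f (x t) (u t))) $ i \<le> - c * g t * (H *v e) $ i"
          by (rule key[OF cI lam le]) (use act k False in \<open>simp add: \<rho>_def E_def sg_def matrix_vector_mult_diff_distrib\<close>)
        moreover have "(H *v (f (y t) (v t) - f (y t) (u t))) $ i \<le> \<beta> * (H *v e) $ i"
          using inb[OF tT, of "y t" i] by (simp add: matrix_vector_mult_diff_distrib)
        ultimately show ?thesis using k False
          by (simp add: \<rho>'_def E_def sg_def matrix_vector_mult_diff_distrib algebra_simps)
      qed
    qed
  qed (use \<beta> t in auto)
  then show ?thesis by (simp add: g_def)
qed

end

context sys begin

lemma i_ii:
  assumes cI: "\<And>x u i. (H *v (Dx x u *v e)) $ i \<le> - c * (H *v e) $ i"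
    and x: "trajectory f u x" and y: "trajectory f u y" and t: "t \<ge> 0"
  shows "N (x t - y t) \<le> exp (- c * t) * N (x 0 - y 0)"
  using estimate[OF cI x y order_refl, of t t] t by simp

lemma ii_i:
  assumes ii: "\<And>u x y t. continuous_on {0..} u \<Longrightarrow> trajectory f u x \<Longrightarrow> trajectory f u y \<Longrightarrow> t \<ge> 0 \<Longrightarrow>
       N (x t - y t) \<le> exp (- c * t) * N (x 0 - y 0)"
  shows "(H *v (Dx x0 u0 *v e)) $ i \<le> - c * (H *v e) $ i"
proof -
  have uc: "continuous_on {0..} (\<lambda>_::real. u0)" by simp
  have step: "(H *v f (x0 + h *\<^sub>R e) u0) $ i - (H *v f x0 u0) $ i \<le> - c * h * (H *v e) $ i" if h: "h > 0" for h
  proof -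
    obtain X where X: "trajectory f (\<lambda>_. u0) X" "X 0 = x0" using exists_sol[OF uc] by blast
    obtain Y where Y: "trajectory f (\<lambda>_. u0) Y" "Y 0 = x0 + h *\<^sub>R e" using exists_sol[OF uc] by blast
    define \<psi> where psi: "\<psi> = (\<lambda>t. exp (- c * t) * h * (H *v e) $ i - ((H *v Y t) $ i - (H *v X t) $ i))"
    have ge: "\<psi> 0 \<le> \<psi> t" if "t \<ge> 0" for t
    proof -
      have "N (Y t - X t) \<le> exp (- c * t) * N (Y 0 - X 0)" using ii[OF uc Y(1) X(1) that] .
      also have "N (Y 0 - X 0) = h * N e" using X Y h by (simp add: N_scale)
      also have "\<dots> \<le> h" using N_e_le h by (simp add: mult_le_cancel_left1)
      finally have "N (Y t - X t) \<le> exp (- c * t) * h" by (simp add: mult_left_mono)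
      then have "N (Y t - X t) * (H *v e) $ i \<le> exp (- c * t) * h * (H *v e) $ i"
        by (rule mult_right_mono) (rule He_nonneg)
      moreover have "(H *v (Y t - X t)) $ i \<le> N (Y t - X t) * (H *v e) $ i"
        using N_G1[of "Y t - X t" i] by simp
      moreover have "\<psi> 0 = 0" using X Y by (simp add: psi matrix_vector_right_distrib matrix_vector_mult_scaleR)
      ultimately show ?thesis by (simp add: psi matrix_vector_mult_diff_distrib)
    qed
    have d: "(\<psi> has_real_derivative
       - c * h * (H *v e) $ i - ((H *v f (Y 0) u0) $ i - (H *v f (X 0) u0) $ i)) (at 0 within {0..})"
    proof -
      have dY: "((\<lambda>t. (H *v Y t) $ i) has_real_derivative (H *v f (Y 0) u0) $ i) (at 0 within {0..})"
        using traj_row[OF Y(1), of 0] by simp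
      have dX: "((\<lambda>t. (H *v X t) $ i) has_real_derivative (H *v f (X 0) u0) $ i) (at 0 within {0..})"
        using traj_row[OF X(1), of 0] by simp
      have de: "((\<lambda>t. exp (- c * t) * h * (H *v e) $ i) has_real_derivative - c * h * (H *v e) $ i) (at 0 within {0..})"
        by (auto intro!: derivative_eq_intros)
      show ?thesis unfolding psi by (rule DERIV_diff[OF de DERIV_diff[OF dY dX]])
    qed
    have "0 \<le> - c * h * (H *v e) $ i - ((H *v f (Y 0) u0) $ i - (H *v f (X 0) u0) $ i)"
      by (rule deriv_nonneg_at0[OF d ge]) auto
    then show ?thesis using X Y by simp
  qed
  define \<phi> where "\<phi> s = (H *v f (x0 + s *\<^sub>R e) u0) $ i" for s
  have d: "(\<phi> has_real_derivative (H *v (Dx x0 u0 *v e)) $ i) (at 0 within {0<..})"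
    using row_deriv[OF fx_deriv[of x0 e u0 0], of H i] unfolding \<phi>_def
    by (auto intro: has_field_derivative_at_within)
  then have "((\<lambda>s. (\<phi> s - \<phi> 0) / (s - 0)) \<longlongrightarrow> (H *v (Dx x0 u0 *v e)) $ i) (at_right 0)"
    by (simp add: has_field_derivative_iff)
  moreover have "eventually (\<lambda>s. (\<phi> s - \<phi> 0) / (s - 0) \<le> - c * (H *v e) $ i) (at_right (0::real))"

  proof (rule eventually_mono[OF eventually_at_right_less])
    fix s :: real assume s: "0 < s"
    then show "(\<phi> s - \<phi> 0) / (s - 0) \<le> - c * (H *v e) $ i"
      using step[OF s] by (simp add: \<phi>_def divide_le_eq mult_ac)
  qed
  ultimately show ?thesis by (rule tendsto_upperbound) simp
qed

end

context sys begin

lemma nU_cont: "continuous_on S nU"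
proof -
  have "convex_on UNIV nU"
  proof (rule convex_onI)
    fix t :: real and x y assume t: "0 < t" "t < 1"
    have "nU ((1 - t) *\<^sub>R x + t *\<^sub>R y) \<le> nU ((1 - t) *\<^sub>R x) + nU (t *\<^sub>R y)"
      using normU unfolding is_norm_def by blast
    also have "\<dots> = \<bar>1 - t\<bar> * nU x + \<bar>t\<bar> * nU y"
      using normU by (simp add: is_norm_def)
    also have "\<dots> = (1 - t) * nU x + t * nU y" using t by simp
    finally show "nU ((1 - t) *\<^sub>R x + t *\<^sub>R y) \<le> (1 - t) * nU x + t * nU y" .
  qed simp
  then have "continuous_on UNIV nU" by (intro convex_on_continuous) auto
  then show ?thesis by (rule continuous_on_subset) simp
qed

lemma i_iii:
  assumes cI: "\<And>x u i. (H *v (Dx x u *v e)) $ i \<le> - c * (H *v e) $ i"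
    and u: "continuous_on {0..} u" and v: "continuous_on {0..} v"
    and x: "trajectory f u x" and y: "trajectory f v y" and t: "t \<ge> 0"
    and ell: "ell = (SUP z \<in> {z :: (real^'n) \<times> (real^'p) \<times> (real^'p). snd (snd z) \<noteq> 0}.
                   ereal (gauge_norm K e (Du (fst z) (fst (snd z)) *v snd (snd z)) / nU (snd (snd z))))"
  shows "ereal (gauge_norm K e (x t - y t))
             \<le> ereal (exp (- c * t) * gauge_norm K e (x 0 - y 0))
                + ell * ereal (phi c t) * ereal (SUP \<tau>\<in>{0..t}. nU (u \<tau> - v \<tau>))"
proof -
  define M where "M = (SUP \<tau>\<in>{0..t}. nU (u \<tau> - v \<tau>))"
  have cM: "continuous_on {0..t} (\<lambda>\<tau>. nU (u \<tau> - v \<tau>))"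
    by (rule continuous_on_compose2[OF nU_cont, of _ "\<lambda>\<tau>. u \<tau> - v \<tau>"])
       (auto intro!: continuous_on_diff intro: continuous_on_subset[OF u] continuous_on_subset[OF v])
  have bdd: "bdd_above ((\<lambda>\<tau>. nU (u \<tau> - v \<tau>)) ` {0..t})"
    by (intro bounded_imp_bdd_above compact_imp_bounded compact_continuous_image cM) simp
  have Mup: "nU (u \<tau> - v \<tau>) \<le> M" if "\<tau> \<in> {0..t}" for \<tau>
    unfolding M_def using bdd that by (rule cSUP_upper2) simp
  have M0: "0 \<le> M" using Mup[of 0] t nU_nonneg[of "u 0 - v 0"] by simp
  define Z where "Z = {z :: (real^'n) \<times> (real^'p) \<times> (real^'p). snd (snd z) \<noteq> 0}"
  define F where "F z = ereal (gauge_norm K e (Du (fst z) (fst (snd z)) *v snd (snd z)) / nU (snd (snd z)))" for z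
  have ellF: "ell = (SUP z\<in>Z. F z)" unfolding ell Z_def F_def ..
  have F0: "F z \<ge> 0" for z unfolding F_def by (simp add: gauge N_nonneg nU_nonneg)
  have ne: "((\<chi> j. 1)::real^'p) \<noteq> 0" by (simp add: vec_eq_iff)
  have ell0: "ell \<ge> 0" unfolding ellF
    by (rule SUP_upper2[of "(0, 0, \<chi> j. 1)"]) (use ne F0 in \<open>auto simp: Z_def\<close>)
  show ?thesis
  proof (cases "t = 0")
    case True
    have z: "ell * ereal (phi c t) * ereal (SUP \<tau>\<in>{0..t}. nU (u \<tau> - v \<tau>)) = 0" using True by (cases ell) simp_all
    show ?thesis unfolding z using True by simp
  next
    case False
    then have tp: "t > 0" using t by simp
    have php: "phi c t > 0" by (rule phi_pos[OF tp])
    show ?thesis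
    proof (cases ell)
      case (real L)
      have L0: "L \<ge> 0" using ell0 real by simp
      have Lb: "N (Du x' u' *v \<eta>) \<le> L * nU \<eta>" if "\<eta> \<noteq> 0" for x' u' \<eta>
      proof -
        have "F (x', u', \<eta>) \<le> ell" unfolding ellF by (rule SUP_upper) (use that in \<open>simp add: Z_def\<close>)
        then have "N (Du x' u' *v \<eta>) / nU \<eta> \<le> L" using real by (simp add: F_def gauge)
        moreover have "nU \<eta> > 0" using that nU_nonneg[of \<eta>] nU_eq0[of \<eta>] by simp
        ultimately show ?thesis by (simp add: divide_le_eq)
      qed
      have "N (x t - y t) \<le> exp (- c * t) * N (x 0 - y 0) + (L * M) * phi c t"
      proof (rule estimate[OF cI x y _ _ ])
        show "0 \<le> L * M" using L0 M0 by simp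
        show "\<bar>(H *v (f b (u \<tau>) - f b (v \<tau>))) $ i\<bar> \<le> L * M * (H *v e) $ i" if "\<tau> \<in> {0..t}" for \<tau> b i
        proof -
          have "\<bar>(H *v (f b (u \<tau>) - f b (v \<tau>))) $ i\<bar> \<le> L * nU (u \<tau> - v \<tau>) * (H *v e) $ i"
            by (rule input_bound[OF Lb])
          also have "\<dots> \<le> L * M * (H *v e) $ i"
            by (intro mult_right_mono mult_left_mono Mup that L0 He_nonneg)
          finally show ?thesis .
        qed
      qed (use t in simp)
      then show ?thesis using real by (simp add: gauge M_def[symmetric] mult_ac)
    next
      case PInf
      show ?thesis
      proof (cases "M = 0")
        case True
        have eq: "u \<tau> = v \<tau>" if "\<tau> \<in> {0..t}" for \<tau>
          using Mup[OF that] True nU_nonneg[of "u \<tau> - v \<tau>"] nU_eq0[of "u \<tau> - v \<tau>"] by simp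
        have "N (x t - y t) \<le> exp (- c * t) * N (x 0 - y 0) + 0 * phi c t"
          by (rule estimate[OF cI x y order_refl]) (use eq t in auto)
        then show ?thesis using PInf True by (simp add: gauge M_def[symmetric])
      next
        case False
        then have "M > 0" using M0 by simp
        then show ?thesis using PInf php by (simp add: M_def[symmetric])
      qed
    next
      case MInf then show ?thesis using ell0 by simp
    qed
  qed
qed

end



lemma vdq:
  assumes "((x::real \<Rightarrow> real^'n) has_vector_derivative D) (at t within {0..})" "t \<ge> 0"
  shows "((\<lambda>h. (1/h) *\<^sub>R (x (t + h) - x t)) \<longlongrightarrow> D) (at_right 0)"
proof (rule vec_tendstoI)
  fix j
  have d: "((\<lambda>s. x s $ j) has_real_derivative D $ j) (at t within {t..})"
    unfolding has_real_derivative_iff_has_vector_derivative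
    by (rule bounded_linear.has_vector_derivative[OF bounded_linear_vec_nth
          has_vector_derivative_within_subset[OF assms(1)]]) (use assms(2) in auto)
  then have "((\<lambda>s. (x s $ j - x t $ j) / (s - t)) \<longlongrightarrow> D $ j) (at_right t)"
    by (simp add: has_field_derivative_iff at_within_Ici_at_right)
  then have "((\<lambda>h. (x (h + t) $ j - x t $ j) / (h + t - t)) \<longlongrightarrow> D $ j) (at_right 0)"
    by (simp add: filterlim_at_right_to_0[of _ _ t])
  then show "((\<lambda>h. ((1/h) *\<^sub>R (x (t + h) - x t)) $ j) \<longlongrightarrow> D $ j) (at_right 0)"
    by (simp add: add.commute divide_inverse mult.commute)
qed

context sys begin

lemma traj_shift_const:
  assumes "trajectory f (\<lambda>_. u0) x" "h \<ge> 0"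
  shows "trajectory f (\<lambda>_. u0) (\<lambda>t. x (t + h))"
  using traj_shift[OF assms] by simp

lemma N_tendsto: "(g \<longlongrightarrow> l) F \<Longrightarrow> ((\<lambda>x. N (g x)) \<longlongrightarrow> N l) F"
  by (rule continuous_on_tendsto_compose[OF continuous_on_N[of UNIV]]) auto

end

locale psys = sys f Dx Du K H e nU
  for f :: "real^'n \<Rightarrow> real^'p \<Rightarrow> real^'n" and Dx Du K and H :: "real^'n^'m" and e nU +
  fixes cp :: real
  assumes pointed: "pointed_cone K"
    and cp: "cp > 0"
    and cI: "\<And>x u i. (H *v (Dx x u *v e)) $ i \<le> - cp * (H *v e) $ i"
begin

lemma H_inj: "H *v w = 0 \<Longrightarrow> w = 0"
proof -
  assume w: "H *v w = 0"
  have "w \<in> K" "- w \<in> K" using w by (auto simp: KH hcone_def vec.neg vec_eq_iff)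
  then have "w \<in> K \<inter> uminus ` K" by (auto intro: image_eqI[of _ _ "- w"])
  then have "w \<in> {0}" using pointed unfolding pointed_cone_def by simp
  then show "w = 0" by simp
qed

lemma N_pos: "v \<noteq> 0 \<Longrightarrow> N v > 0"
  using N_eq0_iff[of v] H_inj[of v] N_nonneg[of v] by auto

lemma N_lower: "\<exists>m>0. \<forall>v. m * norm v \<le> N v"
proof -
  have ne: "sphere (0::real^'n) 1 \<noteq> {}"
    by (metis (mono_tags) empty_iff mem_sphere_0 norm_sgn sgn_zero_iff ex_in_conv vec_eq_iff zero_neq_one
        norm_one)
  obtain x0 where x0: "x0 \<in> sphere 0 1" "\<And>y. y \<in> sphere 0 1 \<Longrightarrow> N x0 \<le> N y"
    using continuous_attains_inf[OF compact_sphere ne continuous_on_N] by blast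
  have m: "N x0 > 0" using x0(1) N_pos[of x0] by (metis mem_sphere_0 norm_zero zero_neq_one)
  have "N x0 * norm v \<le> N v" for v
  proof (cases "v = 0")
    case False
    have "N x0 \<le> N ((1 / norm v) *\<^sub>R v)" using x0(2)[of "(1 / norm v) *\<^sub>R v"] False by simp
    also have "\<dots> = N v / norm v" using N_scale[of "1 / norm v" v] by simp
    finally show ?thesis using False by (simp add: le_divide_eq)
  qed simp
  then show ?thesis using m by blast
qed

lemma N_upper: "\<exists>M>0. \<forall>v. N v \<le> M * norm v"
proof -
  have ne: "sphere (0::real^'n) 1 \<noteq> {}"
    by (metis (mono_tags) empty_iff mem_sphere_0 norm_sgn sgn_zero_iff ex_in_conv vec_eq_iff zero_neq_one
        norm_one)
  obtain x0 where x0: "x0 \<in> sphere 0 1" "\<And>y. y \<in> sphere 0 1 \<Longrightarrow> N y \<le> N x0"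
    using continuous_attains_sup[OF compact_sphere ne continuous_on_N] by blast
  have m: "N x0 > 0" using x0(1) N_pos[of x0] by (metis mem_sphere_0 norm_zero zero_neq_one)
  have "N v \<le> N x0 * norm v" for v
  proof (cases "v = 0")
    case False
    have "N ((1 / norm v) *\<^sub>R v) \<le> N x0" using x0(2)[of "(1 / norm v) *\<^sub>R v"] False by simp
    moreover have "N ((1 / norm v) *\<^sub>R v) = N v / norm v" using N_scale[of "1 / norm v" v] by simp
    ultimately show ?thesis using False by (simp add: divide_le_eq mult.commute)
  qed simp
  then show ?thesis using m by blast
qed

lemma contr:
  assumes "trajectory f u x" "trajectory f u y" "t \<ge> 0"
  shows "N (x t - y t) \<le> exp (- cp * t) * N (x 0 - y 0)"
  by (rule i_ii[OF cI assms])

lemma fdecay: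
  assumes X: "trajectory f (\<lambda>_. u0) X" and t: "t \<ge> 0"
  shows "N (f (X t) u0) \<le> exp (- cp * t) * N (f (X 0) u0)"
proof -
  have l1: "((\<lambda>h. N ((1/h) *\<^sub>R (X (t + h) - X t))) \<longlongrightarrow> N (f (X t) u0)) (at_right 0)"
    by (rule N_tendsto, rule vdq[OF traj_deriv[OF X t] t])
  have l2: "((\<lambda>h. exp (- cp * t) * N ((1/h) *\<^sub>R (X (0 + h) - X 0))) \<longlongrightarrow> exp (- cp * t) * N (f (X 0) u0)) (at_right 0)"
  proof -
    have v0: "((\<lambda>h. (1/h) *\<^sub>R (X (0 + h) - X 0)) \<longlongrightarrow> f (X 0) u0) (at_right 0)"
      using vdq[OF traj_deriv[OF X order_refl] order_refl] by simp
    show ?thesis by (intro tendsto_mult_left N_tendsto v0)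
  qed
  have ev: "eventually (\<lambda>h. N ((1/h) *\<^sub>R (X (t + h) - X t)) \<le> exp (- cp * t) * N ((1/h) *\<^sub>R (X (0 + h) - X 0))) (at_right 0)"
  proof (rule eventually_mono[OF eventually_at_right_less])
    fix h :: real assume h: "0 < h"
    have "N (X (t + h) - X t) \<le> exp (- cp * t) * N (X (0 + h) - X 0)"
      using contr[OF traj_shift_const[OF X, of h] X t] h by (simp add: add.commute)
    then have "N (X (t + h) - X t) / h \<le> exp (- cp * t) * N (X (0 + h) - X 0) / h"
      using h by (rule divide_right_mono[OF _ less_imp_le])
    moreover have "N ((1/h) *\<^sub>R v) = N v / h" for v using h by (simp add: N_scale)
    ultimately show "N ((1/h) *\<^sub>R (X (t + h) - X t)) \<le> exp (- cp * t) * N ((1/h) *\<^sub>R (X (0 + h) - X 0))"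
      by simp
  qed
  show ?thesis by (rule tendsto_le[OF _ l2 l1 ev]) simp
qed

end

lemma within_to_at:
  assumes "t > 0" "(\<phi> has_real_derivative D) (at t within {0..})"
  shows "(\<phi> has_real_derivative D) (at t)"
proof -
  have "(\<phi> has_real_derivative D) (at t within {0<..})"
    by (rule has_field_derivative_subset[OF assms(2)]) auto
  moreover have "at t within {0<..} = at t" by (rule at_within_open) (use assms(1) in auto)
  ultimately show ?thesis by simp
qed

context psys begin

lemma flower:
  assumes xs: "f xs u0 = 0"
  shows "cp * N (a - xs) \<le> N (f a u0)"
proof -
  have uc: "continuous_on {0..} (\<lambda>_::real. u0)" by simp
  obtain X where X: "trajectory f (\<lambda>_. u0) X" "X 0 = a" using exists_sol[OF uc] by blast
  have l0: "((\<lambda>h. (1 - exp (- cp * h)) / h) \<longlongrightarrow> cp) (at_right 0)" using cp by real_asymp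
  have l1: "((\<lambda>h. (1 - exp (- cp * h)) / h * N (a - xs)) \<longlongrightarrow> cp * N (a - xs)) (at_right 0)"
    by (rule tendsto_mult_right[OF l0])
  have l2: "((\<lambda>h. N ((1/h) *\<^sub>R (X (0 + h) - X 0))) \<longlongrightarrow> N (f a u0)) (at_right 0)"
  proof -
    have v0: "((\<lambda>h. (1/h) *\<^sub>R (X (0 + h) - X 0)) \<longlongrightarrow> f (X 0) u0) (at_right 0)"
      using vdq[OF traj_deriv[OF X(1) order_refl] order_refl] by simp
    show ?thesis using N_tendsto[OF v0] X(2) by simp
  qed
  have ev: "eventually (\<lambda>h. (1 - exp (- cp * h)) / h * N (a - xs) \<le> N ((1/h) *\<^sub>R (X (0 + h) - X 0))) (at_right 0)"
  proof (rule eventually_mono[OF eventually_at_right_less])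
    fix h :: real assume h: "0 < h"
    have c1: "N (X h - xs) \<le> exp (- cp * h) * N (a - xs)"
      using contr[OF X(1) traj_const[OF xs] less_imp_le[OF h]] X(2) by simp
    have c2: "N (a - xs) \<le> N (X h - xs) + N (a - X h)"
      using N_add[of "X h - xs" "a - X h"] by simp
    have c3: "N (a - X h) = h * N ((1/h) *\<^sub>R (X (0 + h) - X 0))"
      using h X(2) N_scale[of "1/h" "X h - a"] N_minus_commute[of a "X h"] by simp
    have "(1 - exp (- cp * h)) * N (a - xs) \<le> h * N ((1/h) *\<^sub>R (X (0 + h) - X 0))"
      using c1 c2 c3 by (simp add: algebra_simps)
    then show "(1 - exp (- cp * h)) / h * N (a - xs) \<le> N ((1/h) *\<^sub>R (X (0 + h) - X 0))"
      using h by (simp add: divide_le_eq mult.commute)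
  qed
  show ?thesis by (rule tendsto_le[OF _ l2 l1 ev]) simp
qed

lemma tail_bound:
  assumes X: "trajectory f (\<lambda>_. u0) X" and s: "0 \<le> s" "s \<le> t"
  shows "N (X t - X s) \<le> N (f (X 0) u0) * exp (- cp * s) / cp"
proof (rule N_G2)
  define G where "G = N (f (X 0) u0)"
  show "0 \<le> N (f (X 0) u0) * exp (- cp * s) / cp" using cp by (simp add: N_nonneg)
  fix i
  have side: "\<sigma> * (H *v (X t - X s)) $ i \<le> G * exp (- cp * s) / cp * (H *v e) $ i"
    if sg: "\<bar>\<sigma>\<bar> = 1" for \<sigma> :: real
  proof -
    define \<psi> where "\<psi> \<tau> = \<sigma> * (H *v X \<tau>) $ i + G * (H *v e) $ i * exp (- cp * \<tau>) / cp" for \<tau>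
    have "\<psi> t \<le> \<psi> s"
    proof (rule DERIV_nonpos_imp_decreasing_open[OF s(2)])
      fix z assume z: "s < z" "z < t"
      then have zp: "z > 0" using s by simp
      have dz: "((\<lambda>\<tau>. (H *v X \<tau>) $ i) has_real_derivative (H *v f (X z) u0) $ i) (at z)"
        using within_to_at[OF zp traj_row[OF X, of z i]] zp by simp
      have "(\<psi> has_real_derivative \<sigma> * (H *v f (X z) u0) $ i + G * (H *v e) $ i * (- cp * exp (- cp * z)) / cp) (at z)"
        unfolding \<psi>_def by (auto intro!: derivative_eq_intros dz)
      moreover have "\<sigma> * (H *v f (X z) u0) $ i + G * (H *v e) $ i * (- cp * exp (- cp * z)) / cp \<le> 0"
      proof -
        have "\<sigma> * (H *v f (X z) u0) $ i \<le> \<bar>(H *v f (X z) u0) $ i\<bar>"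
          using sg by (metis abs_ge_self abs_mult mult_1 order_trans)
        also have "\<dots> \<le> N (f (X z) u0) * (H *v e) $ i" by (rule N_G1)
        also have "\<dots> \<le> (exp (- cp * z) * G) * (H *v e) $ i"
          unfolding G_def by (rule mult_right_mono[OF fdecay[OF X less_imp_le[OF zp]] He_nonneg])
        finally show ?thesis using cp by (simp add: mult_ac)
      qed
      ultimately show "\<exists>y. (\<psi> has_real_derivative y) (at z) \<and> y \<le> 0" by blast
    next
      have "continuous_on {s..t} X" by (rule continuous_on_subset[OF traj_cont[OF X]]) (use s in auto)
      then show "continuous_on {s..t} \<psi>" unfolding \<psi>_def row_comp using cp by (intro continuous_intros) auto
    qed
    moreover have "0 \<le> G * (H *v e) $ i * exp (- cp * t) / cp"
      unfolding G_def by (intro divide_nonneg_nonneg mult_nonneg_nonneg N_nonneg He_nonneg) (use cp in auto)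
    moreover have "\<sigma> * (H *v (X t - X s)) $ i = \<sigma> * (H *v X t) $ i - \<sigma> * (H *v X s) $ i"
      by (simp add: matrix_vector_mult_diff_distrib right_diff_distrib)
    ultimately have "\<sigma> * (H *v (X t - X s)) $ i \<le> G * (H *v e) $ i * exp (- cp * s) / cp"
      unfolding \<psi>_def by linarith
    then show ?thesis by (simp add: mult_ac)
  qed
  show "\<bar>(H *v (X t - X s)) $ i\<bar> \<le> N (f (X 0) u0) * exp (- cp * s) / cp * (H *v e) $ i"
  proof -
    have "(H *v (X t - X s)) $ i \<le> G * exp (- cp * s) / cp * (H *v e) $ i" using side[of 1] by simp
    moreover have "- (H *v (X t - X s)) $ i \<le> G * exp (- cp * s) / cp * (H *v e) $ i" using side[of "-1"] by simp
    ultimately show ?thesis unfolding G_def abs_le_iff by simp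
  qed
qed

end

context psys begin

lemma equilibrium_exists: "\<exists>xs. f xs u0 = 0"
proof -
  have uc: "continuous_on {0..} (\<lambda>_::real. u0)" by simp
  obtain X where X: "trajectory f (\<lambda>_. u0) X" using exists_sol[OF uc] by blast
  obtain m0 where m0: "m0 > 0" "\<And>v. m0 * norm v \<le> N v" using N_lower by blast
  define G where "G = N (f (X 0) u0)"
  have G0: "G \<ge> 0" by (simp add: G_def N_nonneg)
  define Y where "Y n = X (real n)" for n
  have nb: "norm v \<le> N v / m0" for v using m0 by (simp add: le_divide_eq mult.commute)
  have e0: "(\<lambda>n. exp (- cp * real n)) \<longlonglongrightarrow> 0" using cp by real_asymp
  have b0: "(\<lambda>n. G * exp (- cp * real n) / cp / m0) \<longlonglongrightarrow> 0"
    using tendsto_divide_zero[OF tendsto_divide_zero[OF tendsto_mult_right_zero[OF e0, of G] , of cp], of m0]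
    by (simp add: mult.commute)
  have tb: "norm (Y b - Y a) \<le> G * exp (- cp * real a) / cp / m0" if "a \<le> b" for a b
  proof -
    have "norm (Y b - Y a) \<le> N (Y b - Y a) / m0" by (rule nb)
    also have "\<dots> \<le> G * exp (- cp * real a) / cp / m0"
      unfolding Y_def G_def using m0(1) that
      by (intro divide_right_mono tail_bound[OF X]) auto
    finally show ?thesis .
  qed
  have "Cauchy Y"
  proof (rule metric_CauchyI)
    fix \<epsilon> :: real assume \<epsilon>: "\<epsilon> > 0"
    obtain M where M: "\<And>n. n \<ge> M \<Longrightarrow> G * exp (- cp * real n) / cp / m0 < \<epsilon>"
      using order_tendstoD(2)[OF b0 \<epsilon>] unfolding eventually_sequentially by blast
    show "\<exists>M. \<forall>m\<ge>M. \<forall>n\<ge>M. dist (Y m) (Y n) < \<epsilon>"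
    proof (intro exI allI impI)
      fix m n assume mn: "M \<le> m" "M \<le> n"
      show "dist (Y m) (Y n) < \<epsilon>"
      proof (cases "m \<le> n")
        case True
        then show ?thesis using tb[OF True] M[OF mn(1)] by (simp add: dist_norm norm_minus_commute)
      next
        case False
        then show ?thesis using tb[of n m] M[OF mn(2)] by (simp add: dist_norm)
      qed
    qed
  qed
  then obtain L where L: "Y \<longlonglongrightarrow> L" using Cauchy_convergent_iff convergent_def by blast
  have fL: "(\<lambda>n. f (Y n) u0) \<longlonglongrightarrow> f L u0"
    by (rule continuous_on_tendsto_compose[OF f_cont[of UNIV] L]) auto
  have f0: "(\<lambda>n. f (Y n) u0) \<longlonglongrightarrow> 0"
  proof (rule Lim_null_comparison)
    show "eventually (\<lambda>n. norm (f (Y n) u0) \<le> exp (- cp * real n) * G / m0) sequentially"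
    proof (rule always_eventually, rule allI)
      fix n
      have "norm (f (Y n) u0) \<le> N (f (Y n) u0) / m0" by (rule nb)
      also have "\<dots> \<le> exp (- cp * real n) * G / m0"
        unfolding Y_def G_def using m0(1) by (intro divide_right_mono fdecay[OF X]) auto
      finally show "norm (f (Y n) u0) \<le> exp (- cp * real n) * G / m0" .
    qed
    show "(\<lambda>n. exp (- cp * real n) * G / m0) \<longlonglongrightarrow> 0"
      using tendsto_divide_zero[OF tendsto_mult_left_zero[OF e0, of G], of m0] by simp
  qed
  have "f L u0 = 0" using LIMSEQ_unique[OF fL f0] .
  then show ?thesis by blast
qed

lemma equilibrium_unique:
  assumes "f a u0 = 0" "f b u0 = 0"
  shows "a = b"
proof -
  have "N (a - b) \<le> exp (- cp * 1) * N (a - b)"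
    using contr[OF traj_const[OF assms(1)] traj_const[OF assms(2)], of 1] by simp
  moreover have "exp (- cp * 1) < 1" using cp by simp
  ultimately have "N (a - b) \<le> 0" using N_nonneg[of "a - b"]
    by (metis mult_le_cancel_right1 not_le)
  then have "N (a - b) = 0" using N_nonneg[of "a - b"] by simp
  then show ?thesis using N_pos[of "a - b"] by (cases "a - b = 0") auto
qed

end

context psys begin

lemma radial:
  fixes W :: "real^'n \<Rightarrow> real" and xs :: "real^'n"
  assumes m: "m > 0" and lb: "\<And>x. m * (norm x - norm xs) \<le> W x"
  shows "\<forall>M. \<exists>R. \<forall>x. R \<le> norm x \<longrightarrow> M \<le> W x"
proof
  fix M :: real
  show "\<exists>R. \<forall>x. R \<le> norm x \<longrightarrow> M \<le> W x"
  proof (intro exI allI impI)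
    fix x :: "real^'n" assume x: "\<bar>M\<bar> / m + norm xs \<le> norm x"
    then have "\<bar>M\<bar> / m \<le> norm x - norm xs" by simp
    then have "\<bar>M\<bar> \<le> m * (norm x - norm xs)" using m by (simp add: divide_le_eq mult.commute)
    then show "M \<le> W x" using lb[of x] by simp
  qed
qed

lemma part3:
  "\<exists>xs. f xs u0 = 0 \<and> (\<forall>y. f y u0 = 0 \<longrightarrow> y = xs) \<and> glob_exp_stable f u0 xs \<and>
         global_lyapunov f u0 xs (\<lambda>x. scaled_inf H e (x - xs)) \<and>
         global_lyapunov f u0 xs (\<lambda>x. scaled_inf H e (f x u0))"
proof -
  obtain xs where xs: "f xs u0 = 0" using equilibrium_exists by blast
  have uniq: "\<forall>y. f y u0 = 0 \<longrightarrow> y = xs" using equilibrium_unique xs by blast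
  obtain m0 where m0: "m0 > 0" "\<And>v. m0 * norm v \<le> N v" using N_lower by blast
  obtain Mx where Mx: "Mx > 0" "\<And>v. N v \<le> Mx * norm v" using N_upper by blast
  have nb: "norm v \<le> N v / m0" for v using m0 by (simp add: le_divide_eq mult.commute)
  have ges: "glob_exp_stable f u0 xs"
    unfolding glob_exp_stable_def
  proof (intro exI conjI allI impI)
    show "Mx / m0 > 0" "cp > 0" using Mx m0 cp by auto
    fix x :: "real \<Rightarrow> real^'n" and t :: real assume x: "trajectory f (\<lambda>_. u0) x" and t: "0 \<le> t"
    have "norm (x t - xs) \<le> N (x t - xs) / m0" by (rule nb)
    also have "\<dots> \<le> exp (- cp * t) * N (x 0 - xs) / m0"
      using contr[OF x traj_const[OF xs] t] m0(1) by (simp add: divide_right_mono)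
    also have "\<dots> \<le> exp (- cp * t) * (Mx * norm (x 0 - xs)) / m0"
      using Mx(2)[of "x 0 - xs"] m0(1) by (intro divide_right_mono mult_left_mono) auto
    finally show "norm (x t - xs) \<le> Mx / m0 * exp (- cp * t) * norm (x 0 - xs)" by (simp add: mult_ac)
  qed
  have shift: "trajectory f (\<lambda>_. u0) (\<lambda>\<tau>. x (\<tau> + s))" if "trajectory f (\<lambda>_. u0) x" "s \<ge> 0" for x s
    by (rule traj_shift_const[OF that])
  have V1: "global_lyapunov f u0 xs (\<lambda>x. scaled_inf H e (x - xs))"
    unfolding global_lyapunov_def
  proof (intro conjI)
    show "continuous_on UNIV (\<lambda>x. N (x - xs))"
      by (rule continuous_on_compose2[OF continuous_on_N[of UNIV]]) (auto intro!: continuous_intros)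
    show "N (xs - xs) = 0" by simp
    show "\<forall>x. x \<noteq> xs \<longrightarrow> 0 < N (x - xs)" using N_pos by simp
    show "\<forall>M. \<exists>R. \<forall>x. R \<le> norm x \<longrightarrow> M \<le> N (x - xs)"
    proof (rule radial[OF m0(1)])
      fix x
      have "m0 * (norm x - norm xs) \<le> m0 * norm (x - xs)"
        using m0(1) norm_triangle_ineq2[of x xs] by (intro mult_left_mono) auto
      then show "m0 * (norm x - norm xs) \<le> N (x - xs)" using m0(2)[of "x - xs"] by simp
    qed
    show "\<forall>x. trajectory f (\<lambda>_. u0) x \<longrightarrow> (\<forall>s t. 0 \<le> s \<and> s < t \<and> x s \<noteq> xs \<longrightarrow> N (x t - xs) < N (x s - xs))"
    proof (intro allI impI, elim conjE)
      fix x s t assume x: "trajectory f (\<lambda>_. u0) x" and st: "0 \<le> s" "s < t" "x s \<noteq> xs"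
      have "N (x (t - s + s) - xs) \<le> exp (- cp * (t - s)) * N (x (0 + s) - xs)"
        using contr[OF shift[OF x st(1)] traj_const[OF xs], of "t - s"] st by simp
      moreover have "exp (- cp * (t - s)) < 1" using cp st by simp
      moreover have "N (x s - xs) > 0" using N_pos st(3) by simp
      ultimately show "N (x t - xs) < N (x s - xs)"
        by (simp add: mult_less_cancel_right1 order_le_less_trans[of _ "exp (- cp * (t - s)) * N (x s - xs)"])
    qed
  qed
  have V2: "global_lyapunov f u0 xs (\<lambda>x. scaled_inf H e (f x u0))"
    unfolding global_lyapunov_def
  proof (intro conjI)
    show "continuous_on UNIV (\<lambda>x. N (f x u0))"
      by (rule continuous_on_compose2[OF continuous_on_N[of UNIV] f_cont]) auto
    show "N (f xs u0) = 0" using xs by simp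
    show "\<forall>x. x \<noteq> xs \<longrightarrow> 0 < N (f x u0)" using N_pos uniq by blast
    show "\<forall>M. \<exists>R. \<forall>x. R \<le> norm x \<longrightarrow> M \<le> N (f x u0)"
    proof (rule radial[of "cp * m0"])
      show "cp * m0 > 0" using cp m0 by simp
      fix x
      have "cp * m0 * (norm x - norm xs) \<le> cp * (m0 * norm (x - xs))"
        using m0(1) cp norm_triangle_ineq2[of x xs] by (simp add: mult.assoc mult_left_mono)
      also have "\<dots> \<le> cp * N (x - xs)" using m0(2)[of "x - xs"] cp by (simp add: mult_left_mono)
      also have "\<dots> \<le> N (f x u0)" by (rule flower[OF xs])
      finally show "cp * m0 * (norm x - norm xs) \<le> N (f x u0)" .
    qed
    show "\<forall>x. trajectory f (\<lambda>_. u0) x \<longrightarrow> (\<forall>s t. 0 \<le> s \<and> s < t \<and> x s \<noteq> xs \<longrightarrow> N (f (x t) u0) < N (f (x s) u0))"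
    proof (intro allI impI, elim conjE)
      fix x s t assume x: "trajectory f (\<lambda>_. u0) x" and st: "0 \<le> s" "s < t" "x s \<noteq> xs"
      have "N (f (x (t - s + s)) u0) \<le> exp (- cp * (t - s)) * N (f (x (0 + s)) u0)"
        using fdecay[OF shift[OF x st(1)], of "t - s"] st by simp
      moreover have "exp (- cp * (t - s)) < 1" using cp st by simp
      moreover have "N (f (x s) u0) > 0" using N_pos uniq st(3) by blast
      ultimately show "N (f (x t) u0) < N (f (x s) u0)"
        by (simp add: mult_less_cancel_right1 order_le_less_trans[of _ "exp (- cp * (t - s)) * N (f (x s) u0)"])
    qed
  qed
  show ?thesis using xs uniq ges V1 V2 by blast
qed

end

theorem theorem3:
  fixes f :: "real^'n \<Rightarrow> real^'p \<Rightarrow> real^'n"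
    and Dx :: "real^'n \<Rightarrow> real^'p \<Rightarrow> real^'n^'n"
    and Du :: "real^'n \<Rightarrow> real^'p \<Rightarrow> real^'p^'n"
    and K :: "(real^'n) set" and H :: "real^'n^'m" and V :: "real^'k^'n"
    and e :: "real^'n" and c :: real and nU :: "real^'p \<Rightarrow> real"
  assumes deriv: "\<And>x u. ((\<lambda>z. f (fst z) (snd z)) has_derivative
                      (\<lambda>h. Dx x u *v fst h + Du x u *v snd h)) (at (x, u))"
    and cont_Dx: "continuous_on UNIV (\<lambda>z. Dx (fst z) (snd z))"
    and cont_Du: "continuous_on UNIV (\<lambda>z. Du (fst z) (snd z))"
    and exists_sol: "\<And>u x0. continuous_on {0..} u \<Longrightarrow> \<exists>x. trajectory f u x \<and> x 0 = x0"
    and Kpoly: "proper_polyhedral_cone_rep K H V"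
    and e_int: "e \<in> interior K"
    and normU: "is_norm nU"
    and mono: "monotone_sys f K"
    and kerH: "\<And>x u w. H *v w = 0 \<Longrightarrow> H *v (Dx x u *v w) = 0"
  defines "ell \<equiv> (SUP z \<in> {z :: (real^'n) \<times> (real^'p) \<times> (real^'p). snd (snd z) \<noteq> 0}.
                   ereal (gauge_norm K e (Du (fst z) (fst (snd z)) *v snd (snd z)) / nU (snd (snd z))))"
  shows
   "((\<forall>x u. \<forall>i. (H *v (Dx x u *v e)) $ i \<le> - c * (H *v e) $ i)
     \<longleftrightarrow>
     (\<forall>u x y. continuous_on {0..} u \<longrightarrow> trajectory f u x \<longrightarrow> trajectory f u y \<longrightarrow>
        (\<forall>t\<ge>0. gauge_norm K e (x t - y t) \<le> exp (- c * t) * gauge_norm K e (x 0 - y 0))))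
    \<and>
    ((\<forall>x u. \<forall>i. (H *v (Dx x u *v e)) $ i \<le> - c * (H *v e) $ i)
     \<longleftrightarrow>
     (\<forall>u v x y. continuous_on {0..} u \<longrightarrow> continuous_on {0..} v \<longrightarrow>
        trajectory f u x \<longrightarrow> trajectory f v y \<longrightarrow>
        (\<forall>t\<ge>0. ereal (gauge_norm K e (x t - y t))
             \<le> ereal (exp (- c * t) * gauge_norm K e (x 0 - y 0))
                + ell * ereal (phi c t) * ereal (SUP \<tau>\<in>{0..t}. nU (u \<tau> - v \<tau>)))))
    \<and>
    ((pointed_cone K \<and> (\<exists>c'>0. \<forall>x u. \<forall>i. (H *v (Dx x u *v e)) $ i \<le> - c' * (H *v e) $ i)) \<longrightarrow>
      (\<forall>u0. \<exists>xs. f xs u0 = 0 \<and> (\<forall>y. f y u0 = 0 \<longrightarrow> y = xs) \<and> glob_exp_stable f u0 xs \<and>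
         global_lyapunov f u0 xs (\<lambda>x. scaled_inf H e (x - xs)) \<and>
         global_lyapunov f u0 xs (\<lambda>x. scaled_inf H e (f x u0))))"
proof -
  from Kpoly have KH: "K = hcone H" by (simp add: proper_polyhedral_cone_rep_def)
  interpret sys f Dx Du K H e nU
    by unfold_locales (use deriv exists_sol KH e_int normU mono in auto)
  have ell_eq: "ell = (SUP z \<in> {z :: (real^'n) \<times> (real^'p) \<times> (real^'p). snd (snd z) \<noteq> 0}.
                   ereal (gauge_norm K e (Du (fst z) (fst (snd z)) *v snd (snd z)) / nU (snd (snd z))))"
    using assms by simp
  define CI where "CI = (\<forall>x u. \<forall>i. (H *v (Dx x u *v e)) $ i \<le> - c * (H *v e) $ i)"
  define CII where "CII = (\<forall>u x y. continuous_on {0..} u \<longrightarrow> trajectory f u x \<longrightarrow> trajectory f u y \<longrightarrow>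
        (\<forall>t\<ge>0. gauge_norm K e (x t - y t) \<le> exp (- c * t) * gauge_norm K e (x 0 - y 0)))"
  define CIII where "CIII = (\<forall>u v x y. continuous_on {0..} u \<longrightarrow> continuous_on {0..} v \<longrightarrow>
        trajectory f u x \<longrightarrow> trajectory f v y \<longrightarrow>
        (\<forall>t\<ge>0. ereal (gauge_norm K e (x t - y t))
             \<le> ereal (exp (- c * t) * gauge_norm K e (x 0 - y 0))
                + ell * ereal (phi c t) * ereal (SUP \<tau>\<in>{0..t}. nU (u \<tau> - v \<tau>))))"
  have i_ii': "CI \<Longrightarrow> CII"
    unfolding CI_def CII_def gauge using i_ii by blast
  have ii_i': "CII \<Longrightarrow> CI"
    unfolding CI_def CII_def gauge
  proof (intro allI)
    fix x :: "real^'n" and u :: "real^'p" and i :: 'm assume ii: "\<forall>u x y. continuous_on {0..} u \<longrightarrow> trajectory f u x \<longrightarrow> trajectory f u y \<longrightarrow>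
        (\<forall>t\<ge>0. N (x t - y t) \<le> exp (- c * t) * N (x 0 - y 0))"
    show "(H *v (Dx x u *v e)) $ i \<le> - c * (H *v e) $ i"
      by (rule ii_i) (use ii in blast)
  qed
  have i_iii': "CI \<Longrightarrow> CIII"
    unfolding CI_def CIII_def using i_iii[OF _ _ _ _ _ _ ell_eq] by blast
  have iii_ii': "CIII \<Longrightarrow> CII"
    unfolding CII_def CIII_def
  proof (intro allI impI)
    fix u :: "real \<Rightarrow> real^'p" and x y :: "real \<Rightarrow> real^'n" and t :: real
    assume iii: "\<forall>u v x y. continuous_on {0..} u \<longrightarrow> continuous_on {0..} v \<longrightarrow>
        trajectory f u x \<longrightarrow> trajectory f v y \<longrightarrow>
        (\<forall>t\<ge>0. ereal (gauge_norm K e (x t - y t))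
             \<le> ereal (exp (- c * t) * gauge_norm K e (x 0 - y 0))
                + ell * ereal (phi c t) * ereal (SUP \<tau>\<in>{0..t}. nU (u \<tau> - v \<tau>)))"
      and u: "continuous_on {0..} u" and x: "trajectory f u x" and y: "trajectory f u y" and t: "0 \<le> t"
    have "ereal (gauge_norm K e (x t - y t))
             \<le> ereal (exp (- c * t) * gauge_norm K e (x 0 - y 0))
                + ell * ereal (phi c t) * ereal (SUP \<tau>\<in>{0..t}. nU (u \<tau> - u \<tau>))"
      using iii u x y t by blast
    moreover have S0: "(SUP \<tau>\<in>{0..t}. nU (u \<tau> - u \<tau>)) = 0" using t by (simp add: nU_0)
    moreover have z: "ell * ereal (phi c t) * ereal (SUP \<tau>\<in>{0..t}. nU (u \<tau> - u \<tau>)) = 0"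
      unfolding S0 by (cases ell) simp_all
    ultimately show "gauge_norm K e (x t - y t) \<le> exp (- c * t) * gauge_norm K e (x 0 - y 0)"
      unfolding z by simp
  qed
  have part3': "(pointed_cone K \<and> (\<exists>c'>0. \<forall>x u. \<forall>i. (H *v (Dx x u *v e)) $ i \<le> - c' * (H *v e) $ i)) \<longrightarrow>
      (\<forall>u0. \<exists>xs. f xs u0 = 0 \<and> (\<forall>y. f y u0 = 0 \<longrightarrow> y = xs) \<and> glob_exp_stable f u0 xs \<and>
         global_lyapunov f u0 xs (\<lambda>x. scaled_inf H e (x - xs)) \<and>
         global_lyapunov f u0 xs (\<lambda>x. scaled_inf H e (f x u0)))"
  proof (intro impI allI, elim conjE exE)
    fix u0 cp assume pc: "pointed_cone K" and cp: "cp > 0"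
      and cI: "\<forall>x u. \<forall>i. (H *v (Dx x u *v e)) $ i \<le> - cp * (H *v e) $ i"
    interpret psys f Dx Du K H e nU cp
      by unfold_locales (use pc cp cI in auto)
    show "\<exists>xs. f xs u0 = 0 \<and> (\<forall>y. f y u0 = 0 \<longrightarrow> y = xs) \<and> glob_exp_stable f u0 xs \<and>
         global_lyapunov f u0 xs (\<lambda>x. scaled_inf H e (x - xs)) \<and>
         global_lyapunov f u0 xs (\<lambda>x. scaled_inf H e (f x u0))"
      by (rule part3)
  qed
  have "(CI \<longleftrightarrow> CII) \<and> (CI \<longleftrightarrow> CIII)"
    using i_ii' ii_i' i_iii' iii_ii' by blast
  then show ?thesis using part3' unfolding CI_def CII_def CIII_def by blast
qed

end
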